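(* Let $\{u_{nm}\}_{0\le n\le m<\infty}$ be an arbitrary family of non-negative real numbers, and let $U:[-1,1]\setminus D\to[0,+\infty]$ be defined by $$U(x)=\sum_{0\le n\le m<+\infty}u_{nm}L_{nm}(x).$$ Then $U$ is non-negative, Lebesgue measurable, and even (i.e. $U(-x)=U(x)$ for all $x\in[-1,1]\setminus D$). Moreover, in $[0,+\infty]$, $$\int_{-1}^{1}U(x)\,dx=2\sum_{k=1}^{\infty}\ \sum_{\substack{m,n\ge 0\\ m-n=2k-1}}4^{-k}\binom{2k}{k}u_{nm},$$ and the essential supremum of $U$ on $[-1,1]$ is attained at $x=\pm\tfrac13$, with $$\|U\|_{L^\infty(-1,1)}=U\!\left(\pm\tfrac13\right)=\sum_{k=1}^{\infty}\ \sum_{\substack{m,n\ge 0\\ m-n=2k-1}}u_{nm}.$$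
   Context: Signed binary expansion: every $x\in[-1,1]$ can be written as $x=\sum_{n=0}^{\infty}x_n2^{-(n+1)}$ with digits $x_n\in\{-1,+1\}$; there is a countable set $D\subset[-1,1]$ (consisting of certain dyadic rationals) outside of which this expansion is unique. For $x\in[-1,1]\setminus D$ with digits $(x_n)_{n\ge0}$ and integers $0\le n\le m$, define the loop-counting function $L_{nm}(x)=1$ if $\sum_{j=n}^{m}x_j=0$ and $L_{nm}(x)=0$ otherwise. (Note $\pm\tfrac13\notin D$: $\tfrac13$ has digits $+1,-1,+1,-1,\dots$ and $-\tfrac13$ has digits $-1,+1,-1,+1,\dots$.) *)

theory Defs
  imports "HOL-Analysis.Analysis" "HOL-Probability.Essential_Supremum"
begin

definition sbexp :: "(nat \<Rightarrow> int) \<Rightarrow> real \<Rightarrow> bool" where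
  "sbexp d x \<longleftrightarrow> (\<forall>n. d n \<in> {-1, 1}) \<and> (\<lambda>n. real_of_int (d n) / 2 ^ (n + 1)) sums x"

definition Dset :: "real set" where
  "Dset = {x \<in> {-1..1}. \<not> (\<exists>!d. sbexp d x)}"

definition digit :: "real \<Rightarrow> nat \<Rightarrow> int" where
  "digit x = (THE d. sbexp d x)"

definition Lnm :: "nat \<Rightarrow> nat \<Rightarrow> real \<Rightarrow> real" where
  "Lnm n m x = (if (\<Sum>j=n..m. digit x j) = 0 then 1 else 0)"

definition Ufun :: "(nat \<Rightarrow> nat \<Rightarrow> real) \<Rightarrow> real \<Rightarrow> ennreal" where
  "Ufun u x = infsum (\<lambda>(n, m). ennreal (u n m * Lnm n m x)) {(n, m). n \<le> m}"

end

theory Submission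
  imports Defs
begin


lemma half_sums: "(\<lambda>n. 1 / 2 ^ (n+1) :: real) sums 1"
proof -
  have "(\<lambda>n. (1/2::real) ^ n) sums (1 / (1 - 1/2))" by (rule geometric_sums) simp
  then have "(\<lambda>n. (1/2::real) * (1/2) ^ n) sums ((1/2) * (1 / (1 - 1/2)))" by (rule sums_mult)
  then show ?thesis by (simp add: power_divide)
qed

lemma sbexp_bounds:
  assumes "sbexp d x" shows "-1 \<le> x \<and> x \<le> 1"
proof -
  have s: "(\<lambda>n. real_of_int (d n) / 2 ^ (n + 1)) sums x" and dd: "\<And>n. d n \<in> {-1,1}"
    using assms by (auto simp: sbexp_def)
  have m: "(\<lambda>n. - (1 / 2 ^ (n+1)) :: real) sums - 1" using half_sums by (rule sums_minus)
  have le: "real_of_int (d n) / 2 ^ (n + 1) \<le> 1 / 2 ^ (n+1)" for n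
  proof -
    have "real_of_int (d n) \<le> 1" using dd[of n] by auto
    then show ?thesis by (rule divide_right_mono) simp
  qed
  have ge: "- (1 / 2 ^ (n+1)) \<le> real_of_int (d n) / 2 ^ (n + 1)" for n
  proof -
    have "-1 \<le> real_of_int (d n)" using dd[of n] by auto
    then have "-1 / 2 ^ (n+1) \<le> real_of_int (d n) / 2 ^ (n + 1)" by (rule divide_right_mono) simp
    then show ?thesis by simp
  qed
  have "x \<le> 1"
    by (rule sums_le[OF _ s half_sums]) (use le in auto)
  moreover have "-1 \<le> x"
    by (rule sums_le[OF _ m s]) (use ge in auto)
  ultimately show ?thesis by simp
qed

lemma sbexp_shift:
  assumes "sbexp d x"
  shows "sbexp (\<lambda>n. d (n+N)) (2^N * (x - (\<Sum>i<N. real_of_int (d i) / 2^(i+1))))"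
proof -
  have s: "(\<lambda>n. real_of_int (d n) / 2 ^ (n + 1)) sums x" and dd: "\<And>n. d n \<in> {-1,1}"
    using assms by (auto simp: sbexp_def)
  have "(\<lambda>n. real_of_int (d (n+N)) / 2 ^ (n + N + 1)) sums (x - (\<Sum>i<N. real_of_int (d i) / 2^(i+1)))"
    using s by (subst sums_iff_shift) simp
  then have "(\<lambda>n. 2^N * (real_of_int (d (n+N)) / 2 ^ (n + N + 1))) sums (2^N * (x - (\<Sum>i<N. real_of_int (d i) / 2^(i+1))))"
    by (rule sums_mult)
  moreover have "\<And>n. 2^N * (real_of_int (d (n+N)) / 2 ^ (n + N + 1)) = real_of_int (d (n+N)) / 2 ^ (n + 1)"
    by (simp add: power_add)
  ultimately show ?thesis using dd by (simp add: sbexp_def)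
qed

lemma sbexp_concat:
  assumes w: "\<And>i. i < N \<Longrightarrow> w i \<in> {-1,1}" and e: "sbexp e t"
  shows "sbexp (\<lambda>i. if i < N then w i else e (i - N)) ((\<Sum>i<N. real_of_int (w i) / 2^(i+1)) + t / 2^N)"
proof -
  have s: "(\<lambda>n. real_of_int (e n) / 2 ^ (n + 1)) sums t" and ee: "\<And>n. e n \<in> {-1,1}"
    using e by (auto simp: sbexp_def)
  define f where "f i = real_of_int (if i < N then w i else e (i - N)) / 2^(i+1)" for i
  have "(\<lambda>n. real_of_int (e n) / 2 ^ (n + 1) / 2^N) sums (t / 2^N)" using s by (rule sums_divide)
  moreover have "\<And>n. f (n + N) = real_of_int (e n) / 2 ^ (n + 1) / 2^N"
    by (simp add: f_def power_add)
  ultimately have "(\<lambda>n. f (n+N)) sums (t / 2^N)" by simp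
  then have "f sums (t/2^N + (\<Sum>i<N. f i))" by (simp add: sums_iff_shift)
  moreover have "(\<Sum>i<N. f i) = (\<Sum>i<N. real_of_int (w i) / 2^(i+1))"
    by (rule sum.cong) (auto simp: f_def)
  ultimately show ?thesis using w ee unfolding sbexp_def f_def by (auto simp: add.commute)
qed

primrec rr :: "real \<Rightarrow> nat \<Rightarrow> real" where
  "rr t 0 = t"
| "rr t (Suc n) = 2 * rr t n - (if rr t n \<ge> 0 then 1 else -1)"

definition dg :: "real \<Rightarrow> nat \<Rightarrow> int" where
  "dg t n = (if rr t n \<ge> 0 then 1 else -1)"

lemma rr_bound: "\<bar>t\<bar> \<le> 1 \<Longrightarrow> \<bar>rr t n\<bar> \<le> 1"
  by (induction n) auto

lemma dg_partial: "(\<Sum>i<N. real_of_int (dg t i) / 2^(i+1)) = t - rr t N / 2^N"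
  by (induction N) (auto simp: dg_def field_simps)

lemma sbexp_exists:
  assumes "\<bar>t\<bar> \<le> 1" shows "sbexp (dg t) t"
proof -
  have "(\<lambda>N. rr t N / 2^N) \<longlonglongrightarrow> 0"
  proof (rule Lim_null_comparison)
    show "\<forall>\<^sub>F N in sequentially. norm (rr t N / 2^N) \<le> (1/2)^N"
      using rr_bound[OF assms] by (auto simp: power_divide divide_right_mono)
    show "(\<lambda>N. (1/2::real)^N) \<longlonglongrightarrow> 0" by (rule LIMSEQ_realpow_zero) auto
  qed
  then have "(\<lambda>N. t - rr t N / 2^N) \<longlonglongrightarrow> t - 0" by (intro tendsto_intros)
  then show ?thesis unfolding sbexp_def sums_def dg_partial by (auto simp: dg_def)
qed

definition Dy :: "real set" where
  "Dy = {x. \<exists>k::int. \<exists>i::nat. x * 2^i = of_int k}"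

lemma countable_Dy: "countable Dy"
proof -
  have "Dy \<subseteq> (\<lambda>(k::int, i::nat). of_int k / 2^i) ` UNIV"
  proof
    fix x assume "x \<in> Dy"
    then obtain k i where "x * 2^i = of_int k" by (auto simp: Dy_def)
    then have "x = of_int k / 2^i" by (simp add: field_simps)
    then show "x \<in> (\<lambda>(k::int, i::nat). of_int k / 2^i) ` UNIV" by auto
  qed
  then show ?thesis by (rule countable_subset) simp
qed
lemma dummy: True
  by simp

lemma partial_dyadic: "\<exists>k::int. (\<Sum>j<N. real_of_int (d j) / 2^(j+1)) * 2^N = of_int k"
proof (induction N)
  case 0 then show ?case by auto
next
  case (Suc N)
  then obtain k where k: "(\<Sum>j<N. real_of_int (d j) / 2^(j+1)) * 2^N = of_int k" by auto
  have "(\<Sum>j<Suc N. real_of_int (d j) / 2^(j+1)) * 2^(Suc N) = 2 * ((\<Sum>j<N. real_of_int (d j) / 2^(j+1)) * 2^N) + d N"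
    by (simp add: field_simps)
  then show ?case using k by (metis of_int_add of_int_mult of_int_numeral)
qed

lemma sbexp_two:
  assumes d: "sbexp d x" and e: "sbexp e x" and ne: "d \<noteq> e"
  shows "x \<in> Dy"
proof -
  obtain i where i: "d i \<noteq> e i" and lt: "\<And>j. j < i \<Longrightarrow> d j = e j"
    using ne exists_least_iff[of "\<lambda>i. d i \<noteq> e i"] by (auto simp: fun_eq_iff)
  define c where "c = (\<Sum>j<i. real_of_int (d j) / 2^(j+1))"
  have ce: "c = (\<Sum>j<i. real_of_int (e j) / 2^(j+1))" unfolding c_def by (rule sum.cong) (auto simp: lt)
  have b1: "-1 \<le> 2^(Suc i) * (x - (c + d i / 2^(i+1))) \<and> 2^(Suc i) * (x - (c + d i / 2^(i+1))) \<le> 1"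
    using sbexp_bounds[OF sbexp_shift[OF d, of "Suc i"]] by (simp add: c_def)
  have b2: "-1 \<le> 2^(Suc i) * (x - (c + e i / 2^(i+1))) \<and> 2^(Suc i) * (x - (c + e i / 2^(i+1))) \<le> 1"
    using sbexp_bounds[OF sbexp_shift[OF e, of "Suc i"]] by (simp add: ce)
  define y where "y = 2^(Suc i) * (x - c)"
  have y1: "-1 \<le> y - d i \<and> y - d i \<le> 1" using b1 by (simp add: y_def algebra_simps)
  have y2: "-1 \<le> y - e i \<and> y - e i \<le> 1" using b2 by (simp add: y_def algebra_simps)
  have "d i \<in> {-1,1}" "e i \<in> {-1,1}" using d e by (auto simp: sbexp_def)
  then have "y = 0" using y1 y2 i by auto
  then have "x = c" by (simp add: y_def)
  then show ?thesis using partial_dyadic[of d i] by (auto simp: Dy_def c_def)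
qed

lemma Dset_sub: "Dset \<subseteq> Dy"
proof
  fix x assume x: "x \<in> Dset"
  then have "\<bar>x\<bar> \<le> 1" and nu: "\<not> (\<exists>!d. sbexp d x)" by (auto simp: Dset_def)
  from \<open>\<bar>x\<bar> \<le> 1\<close> have ex: "sbexp (dg x) x" by (rule sbexp_exists)
  then obtain e where "sbexp e x" "e \<noteq> dg x" using nu by blast
  then show "x \<in> Dy" using sbexp_two ex by blast
qed

lemma countable_Dset: "countable Dset"
  using countable_Dy Dset_sub countable_subset by blast



abbreviation SS :: "real set" where "SS \<equiv> {-1..1} - Dset"

lemma SS_unique: "x \<in> SS \<Longrightarrow> \<exists>!d. sbexp d x"
  by (auto simp: Dset_def)

lemma digit_sbexp: "x \<in> SS \<Longrightarrow> sbexp (digit x) x"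
  unfolding digit_def using SS_unique by (rule theI')

lemma digit_eq: "x \<in> SS \<Longrightarrow> sbexp d x \<Longrightarrow> digit x = d"
  unfolding digit_def using SS_unique by (rule the1_equality)

lemma digit_pm: "x \<in> SS \<Longrightarrow> digit x n \<in> {-1,1}"
  using digit_sbexp by (auto simp: sbexp_def)

lemma sbexp_neg: "sbexp d x \<Longrightarrow> sbexp (\<lambda>n. - d n) (-x)"
  unfolding sbexp_def by (auto dest: sums_minus)

lemma notin_Dset_if_unique: "(\<exists>!d. sbexp d x) \<Longrightarrow> x \<notin> Dset"
  by (auto simp: Dset_def)

lemma SS_neg: assumes x: "x \<in> SS" shows "-x \<in> SS" and "digit (-x) = (\<lambda>n. - digit x n)"
proof -
  have s: "sbexp (\<lambda>n. - digit x n) (-x)" by (rule sbexp_neg[OF digit_sbexp[OF x]])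
  have u: "\<exists>!d. sbexp d (-x)"
  proof (rule ex1I[of _ "\<lambda>n. - digit x n"])
    show "sbexp (\<lambda>n. - digit x n) (-x)" by (rule s)
  next
    fix e assume "sbexp e (-x)"
    then have "sbexp (\<lambda>n. - e n) x" using sbexp_neg by fastforce
    then have "digit x = (\<lambda>n. - e n)" using digit_eq[OF x] by blast
    then show "e = (\<lambda>n. - digit x n)" by auto
  qed
  show "-x \<in> SS" using x u by (auto simp: Dset_def)
  then show "digit (-x) = (\<lambda>n. - digit x n)" using digit_eq s by blast
qed

lemma Lnm_neg: "x \<in> SS \<Longrightarrow> Lnm n m (-x) = Lnm n m x"
  using SS_neg(2)[of x] by (simp add: Lnm_def sum_negf)

lemma Ufun_neg: "x \<in> SS \<Longrightarrow> Ufun u (-x) = Ufun u x"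
  by (simp add: Ufun_def Lnm_neg)

definition alt :: "nat \<Rightarrow> int" where "alt n = (-1)^n"

lemma alt_sbexp: "sbexp alt (1/3)"
proof -
  have "(\<lambda>n. (-1/2::real) ^ n) sums (1 / (1 - (-1/2)))" by (rule geometric_sums) simp
  then have "(\<lambda>n. (1/2::real) * (-1/2) ^ n) sums ((1/2) * (1 / (1 - (-1/2))))" by (rule sums_mult)
  moreover have "(1/2::real) * (-1/2) ^ n = real_of_int (alt n) / 2^(n+1)" for n
  proof -
    have "(-1/2::real) ^ n = (-1)^n * (1/2)^n"
      by (metis mult_minus1 power_mult_distrib divide_minus_left)
    then show ?thesis by (simp add: alt_def power_divide)
  qed
  then have eq: "(\<lambda>n. (1/2::real) * (-1/2) ^ n) = (\<lambda>n. real_of_int (alt n) / 2^(n+1))" by (rule ext)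
  have eq2: "(1/2::real) * (1 / (1 - (-1/2))) = 1/3" by simp
  ultimately have "(\<lambda>n. real_of_int (alt n) / 2^(n+1)) sums (1/3)" by (simp only: eq eq2)
  moreover have "alt n \<in> {-1,1}" for n by (cases "even n") (auto simp: alt_def)
  ultimately show ?thesis by (simp add: sbexp_def)
qed

lemma third_notin_Dy: "(1/3::real) \<notin> Dy"
proof
  assume "(1/3::real) \<in> Dy"
  then obtain k :: int and i :: nat where "1/3 * 2^i = (of_int k :: real)" by (auto simp: Dy_def)
  then have "(2::real)^i = of_int (3*k)" by simp
  then have "(2::int)^i = 3*k" by (metis of_int_eq_iff of_int_numeral of_int_power)
  then have "(3::int) dvd 2^i" by simp
  moreover have "prime (3::int)" by simp
  ultimately have "(3::int) dvd 2" using prime_dvd_power by blast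
  then show False by simp
qed

lemma third_SS: "(1/3::real) \<in> SS" "-(1/3::real) \<in> SS"
proof -
  show t: "(1/3::real) \<in> SS" using third_notin_Dy Dset_sub by auto
  then show "-(1/3::real) \<in> SS" by (rule SS_neg)
qed

lemma digit_third: "digit (1/3) = alt"
  using digit_eq[OF third_SS(1) alt_sbexp] .



definition wT :: "nat set \<Rightarrow> nat \<Rightarrow> int" where "wT T i = (if i \<in> T then 1 else -1)"
definition cT :: "nat \<Rightarrow> nat set \<Rightarrow> real" where "cT N T = (\<Sum>i<N. real_of_int (wT T i) / 2^(i+1))"
definition Cyl :: "nat \<Rightarrow> nat set \<Rightarrow> real set" where
  "Cyl N T = {x \<in> SS. \<forall>i<N. digit x i = wT T i}"

lemma half_partial: "(\<Sum>i<N. 1 / 2^(i+1) :: real) = 1 - 1/2^N"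
  by (induction N) (auto simp: field_simps)

lemma cT_bound: "\<bar>cT N T\<bar> \<le> 1 - 1/2^N"
proof -
  have "\<bar>cT N T\<bar> \<le> (\<Sum>i<N. \<bar>real_of_int (wT T i) / 2^(i+1)\<bar>)"
    unfolding cT_def by (rule sum_abs)
  also have "\<dots> = (\<Sum>i<N. 1 / 2^(i+1))" by (rule sum.cong) (auto simp: wT_def)
  finally show ?thesis by (simp only: half_partial)
qed

lemma cyl_closed: assumes "x \<in> Cyl N T" shows "\<bar>x - cT N T\<bar> \<le> 1/2^N"
proof -
  have x: "x \<in> SS" and d: "\<And>i. i < N \<Longrightarrow> digit x i = wT T i" using assms by (auto simp: Cyl_def)
  have "(\<Sum>i<N. real_of_int (digit x i) / 2^(i+1)) = cT N T" unfolding cT_def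
    by (rule sum.cong) (auto simp: d)
  then have "\<bar>2^N * (x - cT N T)\<bar> \<le> 1"
    using sbexp_bounds[OF sbexp_shift[OF digit_sbexp[OF x], of N]] by auto
  then have "2^N * \<bar>x - cT N T\<bar> \<le> 1" by (simp add: abs_mult)
  then show ?thesis by (simp add: field_simps)
qed

lemma cyl_open: assumes x: "x \<in> SS" and lt: "\<bar>x - cT N T\<bar> < 1/2^N" shows "x \<in> Cyl N T"
proof -
  define t where "t = 2^N * (x - cT N T)"
  have "\<bar>t\<bar> = 2^N * \<bar>x - cT N T\<bar>" by (simp add: t_def abs_mult)
  also have "\<dots> < 2^N * (1/2^N)" using lt by (intro mult_strict_left_mono) auto
  finally have "\<bar>t\<bar> < 1" by simp
  then have e: "sbexp (dg t) t" by (intro sbexp_exists) simp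
  have "sbexp (\<lambda>i. if i < N then wT T i else dg t (i - N)) (cT N T + t / 2^N)"
    unfolding cT_def by (rule sbexp_concat[OF _ e]) (auto simp: wT_def)
  moreover have "cT N T + t / 2^N = x" by (simp add: t_def)
  ultimately have "digit x = (\<lambda>i. if i < N then wT T i else dg t (i - N))"
    using digit_eq[OF x] by simp
  then show ?thesis using x by (auto simp: Cyl_def)
qed

lemma Dset_null: "Dset \<in> null_sets lebesgue"
  using countable_imp_null_set_lborel[OF countable_Dset] by (rule null_sets_completionI)

lemma SS_sets: "SS \<in> sets lebesgue"
  using Dset_null by auto

lemma Cyl_sets_emeasure:
  shows "Cyl N T \<in> sets lebesgue" and "emeasure lebesgue (Cyl N T) = ennreal (2 / 2^N)"
proof -
  define h :: real where "h = 1/2^N"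
  define a where "a = cT N T - h"
  define b where "b = cT N T + h"
  have ab: "-1 \<le> a" "b \<le> 1" "a \<le> b" using cT_bound[of N T] by (auto simp: a_def b_def h_def)
  have sub1: "{a<..<b} - Dset \<subseteq> Cyl N T"
  proof
    fix x assume "x \<in> {a<..<b} - Dset"
    then have "x \<in> SS" "\<bar>x - cT N T\<bar> < 1/2^N" using ab by (auto simp: a_def b_def h_def)
    then show "x \<in> Cyl N T" by (rule cyl_open)
  qed
  have sub2: "Cyl N T \<subseteq> {a..b}"
    using cyl_closed by (force simp: a_def b_def h_def abs_le_iff)
  have eq: "Cyl N T = ({a<..<b} - Dset) \<union> (Cyl N T \<inter> {a, b})"
    using sub1 sub2 by (auto simp: Cyl_def)
  have fin: "Cyl N T \<inter> {a, b} \<in> null_sets lebesgue"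
    by (rule null_sets_completionI, rule finite_imp_null_set_lborel) auto
  have o: "{a<..<b} - Dset \<in> sets lebesgue" using Dset_null by auto
  show "Cyl N T \<in> sets lebesgue" by (subst eq) (use o fin in auto)
  have "emeasure lebesgue (Cyl N T) = emeasure lebesgue ({a<..<b} - Dset)"
    by (subst eq, rule emeasure_Un_null_set[OF o fin])
  also have "\<dots> = emeasure lebesgue {a<..<b}"
    by (rule emeasure_Diff_null_set[OF Dset_null]) simp
  also have "\<dots> = ennreal (b - a)" using ab by simp
  also have "b - a = 2 / 2^N" by (simp add: a_def b_def h_def)
  finally show "emeasure lebesgue (Cyl N T) = ennreal (2 / 2^N)" .
qed



definition Tx :: "nat \<Rightarrow> real \<Rightarrow> nat set" where "Tx N x = {i. i < N \<and> digit x i = 1}"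

lemma in_Cyl_Tx: "x \<in> SS \<Longrightarrow> x \<in> Cyl N (Tx N x)"
  using digit_pm[of x] by (fastforce simp: Cyl_def Tx_def wT_def)

lemma Cyl_Tx: "x \<in> Cyl N T \<Longrightarrow> T \<subseteq> {..<N} \<Longrightarrow> Tx N x = T"
  by (auto simp: Cyl_def Tx_def wT_def split: if_splits)

lemma Q_set_eq:
  "{x \<in> SS. Q (Tx N x)} = (\<Union>T\<in>{T. T \<subseteq> {..<N} \<and> Q T}. Cyl N T)"
proof (intro set_eqI iffI)
  fix x assume "x \<in> {x \<in> SS. Q (Tx N x)}"
  then have x: "x \<in> SS" "Q (Tx N x)" by auto
  have "Tx N x \<in> {T. T \<subseteq> {..<N} \<and> Q T}" using x(2) by (auto simp: Tx_def)
  then show "x \<in> (\<Union>T\<in>{T. T \<subseteq> {..<N} \<and> Q T}. Cyl N T)"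
    using in_Cyl_Tx[OF x(1), of N] by blast
next
  fix x assume "x \<in> (\<Union>T\<in>{T. T \<subseteq> {..<N} \<and> Q T}. Cyl N T)"
  then obtain T where "x \<in> Cyl N T" "T \<subseteq> {..<N}" "Q T" by blast
  then show "x \<in> {x \<in> SS. Q (Tx N x)}" using Cyl_Tx by (auto simp: Cyl_def)
qed

lemma Q_set:
  shows "{x \<in> SS. Q (Tx N x)} \<in> sets lebesgue"
    and "emeasure lebesgue {x \<in> SS. Q (Tx N x)} = ennreal (real (card {T. T \<subseteq> {..<N} \<and> Q T}) * (2 / 2^N))"
proof -
  have fin: "finite {T. T \<subseteq> {..<N} \<and> Q T}"
    by (rule finite_subset[of _ "Pow {..<N}"]) auto
  show "{x \<in> SS. Q (Tx N x)} \<in> sets lebesgue"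
    unfolding Q_set_eq using fin Cyl_sets_emeasure(1) by auto
  have disj: "disjoint_family_on (Cyl N) {T. T \<subseteq> {..<N} \<and> Q T}"
    unfolding disjoint_family_on_def using Cyl_Tx by blast
  have "emeasure lebesgue {x \<in> SS. Q (Tx N x)} = (\<Sum>T\<in>{T. T \<subseteq> {..<N} \<and> Q T}. emeasure lebesgue (Cyl N T))"
    unfolding Q_set_eq by (rule sum_emeasure[symmetric]) (use fin disj Cyl_sets_emeasure(1) in auto)
  also have "\<dots> = (\<Sum>T\<in>{T. T \<subseteq> {..<N} \<and> Q T}. ennreal (2 / 2^N))"
    using Cyl_sets_emeasure(2) by simp
  also have "\<dots> = of_nat (card {T. T \<subseteq> {..<N} \<and> Q T}) * ennreal (2 / 2^N)"
    by simp
  also have "\<dots> = ennreal (real (card {T. T \<subseteq> {..<N} \<and> Q T}) * (2 / 2^N))"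
    by (subst ennreal_mult) (auto simp: ennreal_of_nat_eq_real_of_nat)
  finally show "emeasure lebesgue {x \<in> SS. Q (Tx N x)} = ennreal (real (card {T. T \<subseteq> {..<N} \<and> Q T}) * (2 / 2^N))" .
qed

lemma sum_pm:
  assumes "finite F" "\<And>j. j \<in> F \<Longrightarrow> d j \<in> {-1, 1::int}"
  shows "(\<Sum>j\<in>F. d j) = 2 * int (card {j\<in>F. d j = 1}) - int (card F)"
  using assms
proof (induction F rule: finite_induct)
  case empty then show ?case by simp
next
  case (insert a F)
  have "{j \<in> insert a F. d j = 1} = (if d a = 1 then insert a {j\<in>F. d j = 1} else {j\<in>F. d j = 1})" by auto
  moreover have "finite {j\<in>F. d j = 1}" using insert by simp
  moreover have "a \<notin> {j\<in>F. d j = 1}" using insert by simp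
  ultimately show ?case using insert by auto
qed

lemma Lnm_iff:
  assumes x: "x \<in> SS" and nm: "n \<le> m"
  shows "Lnm n m x = (if 2 * card (Tx (Suc m) x \<inter> {n..m}) = Suc m - n then 1 else 0)"
proof -
  have "(\<Sum>j=n..m. digit x j) = 2 * int (card {j\<in>{n..m}. digit x j = 1}) - int (card {n..m})"
    by (rule sum_pm) (use digit_pm[OF x] in auto)
  moreover have "{j\<in>{n..m}. digit x j = 1} = Tx (Suc m) x \<inter> {n..m}" by (auto simp: Tx_def)
  ultimately have "(\<Sum>j=n..m. digit x j) = 0 \<longleftrightarrow> 2 * card (Tx (Suc m) x \<inter> {n..m}) = Suc m - n"
    using nm by auto
  then show ?thesis by (simp add: Lnm_def)
qed

lemma count_subsets:
  assumes "finite A" "finite B" "A \<inter> B = {}"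
  shows "card {T. T \<subseteq> A \<union> B \<and> card (T \<inter> B) = k} = 2 ^ card A * (card B choose k)"
proof -
  have eq: "{T. T \<subseteq> A \<union> B \<and> card (T \<inter> B) = k} = (\<lambda>(U,V). U \<union> V) ` (Pow A \<times> {V. V \<subseteq> B \<and> card V = k})"
  proof safe
    fix T assume T: "T \<subseteq> A \<union> B" "k = card (T \<inter> B)"
    then show "T \<in> (\<lambda>(U,V). U \<union> V) ` (Pow A \<times> {V. V \<subseteq> B \<and> card V = card (T \<inter> B)})"
      by (intro image_eqI[of _ _ "(T \<inter> A, T \<inter> B)"]) auto
  next
    fix U V assume "U \<subseteq> A" "V \<subseteq> B" "k = card V"
    then show "card ((U \<union> V) \<inter> B) = card V" using assms(3)
      by (metis Int_Un_distrib2 Int_absorb2 Un_empty_left inf.absorb_iff2 inf_bot_left inf_commute inf_left_commute)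
  qed auto
  have inj: "inj_on (\<lambda>(U,V). U \<union> V) (Pow A \<times> {V. V \<subseteq> B \<and> card V = k})"
  proof (rule inj_onI, clarsimp)
    fix U V U' V' assume "U \<subseteq> A" "V \<subseteq> B" "U' \<subseteq> A" "V' \<subseteq> B" "U \<union> V = U' \<union> V'"
    then show "U = U' \<and> V = V'" using assms(3) by blast
  qed
  have "card {T. T \<subseteq> A \<union> B \<and> card (T \<inter> B) = k} = card (Pow A) * card {V. V \<subseteq> B \<and> card V = k}"
    unfolding eq by (subst card_image[OF inj]) (simp add: card_cartesian_product)
  then show ?thesis using assms by (simp add: card_Pow n_subsets)
qed

lemma count_L:
  assumes nm: "n \<le> m"
  shows "card {T. T \<subseteq> {..<Suc m} \<and> 2 * card (T \<inter> {n..m}) = Suc m - n}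
    = (if even (Suc m - n) then 2^n * ((Suc m - n) choose ((Suc m - n) div 2)) else 0)"
proof (cases "even (Suc m - n)")
  case True
  have "{T. T \<subseteq> {..<Suc m} \<and> 2 * card (T \<inter> {n..m}) = Suc m - n}
      = {T. T \<subseteq> {..<n} \<union> {n..m} \<and> card (T \<inter> {n..m}) = (Suc m - n) div 2}"
    using True nm by (auto simp: lessThan_Suc_atMost)
  also have "card \<dots> = 2^n * ((Suc m - n) choose ((Suc m - n) div 2))"
    by (subst count_subsets) auto
  finally show ?thesis using True by simp
next
  case False
  have "2 * c \<noteq> Suc m - n" for c using False by (metis dvd_triv_left)
  then have "{T. T \<subseteq> {..<Suc m} \<and> 2 * card (T \<inter> {n..m}) = Suc m - n} = {}" by auto
  then show ?thesis using False by simp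
qed

definition Eset :: "nat \<Rightarrow> nat \<Rightarrow> real set" where
  "Eset n m = {x \<in> SS. 2 * card (Tx (Suc m) x \<inter> {n..m}) = Suc m - n}"

definition pL :: "nat \<Rightarrow> real" where
  "pL L = (if even L then 2 * (1/4) ^ (L div 2) * real (L choose (L div 2)) else 0)"

lemma Eset_sets: "Eset n m \<in> sets lebesgue"
  unfolding Eset_def by (rule Q_set(1))

lemma Eset_emeasure: assumes "n \<le> m" shows "emeasure lebesgue (Eset n m) = ennreal (pL (Suc m - n))"
proof -
  have "emeasure lebesgue (Eset n m) = ennreal (real (card {T. T \<subseteq> {..<Suc m} \<and> 2 * card (T \<inter> {n..m}) = Suc m - n}) * (2 / 2^Suc m))"
    unfolding Eset_def by (rule Q_set(2))
  also have "\<dots> = ennreal (pL (Suc m - n))"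
  proof (cases "even (Suc m - n)")
    case True
    from True obtain k where k: "Suc m - n = 2 * k" by (rule evenE)
    then have sm: "Suc m = n + 2*k" using assms by simp
    have f4: "(4::real)^k = 2^k * 2^k" by (simp add: power_mult_distrib[symmetric])
    have "real (2^n * (2*k choose k)) * (2 / 2^(n + 2*k)) = 2 * (1/4)^k * real (2*k choose k)"
      by (simp add: power_add power_mult field_simps f4 power2_eq_square)
    moreover have c: "card {T. T \<subseteq> {..<Suc m} \<and> 2 * card (T \<inter> {n..m}) = Suc m - n} = 2^n * (2*k choose k)"
      using count_L[OF assms] True k by simp
    ultimately show ?thesis using True k by (simp add: pL_def sm)
  next
    case False then show ?thesis using assms by (simp add: count_L pL_def)
  qed
  finally show ?thesis .
qed

lemma Lnm_Eset: "x \<in> SS \<Longrightarrow> n \<le> m \<Longrightarrow> Lnm n m x = indicator (Eset n m) x"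
  by (simp add: Lnm_iff Eset_def indicator_def)



lemma infsum_nn:
  fixes f :: "'a \<Rightarrow> ennreal"
  assumes A: "countable A"
  shows "infsum f A = (\<integral>\<^sup>+x. f x \<partial>count_space A)"
proof (cases "finite A")
  case True then show ?thesis by (simp add: nn_integral_count_space_finite)
next
  case False
  define g where "g = from_nat_into A"
  have bij: "bij_betw g UNIV A" unfolding g_def by (rule bij_betw_from_nat_into[OF A False])
  have "infsum f A = infsum (\<lambda>n. f (g n)) UNIV"
    by (rule infsum_reindex_bij_betw[OF bij, symmetric])
  also have "\<dots> = (\<Sum>n. f (g n))"
  proof -
    have "((\<lambda>n. f (g n)) has_sum infsum (\<lambda>n. f (g n)) UNIV) UNIV"
      by (intro has_sum_infsum nonneg_summable_on_complete) simp
    then have "(\<lambda>n. f (g n)) sums infsum (\<lambda>n. f (g n)) UNIV" by (rule has_sum_imp_sums)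
    then show ?thesis by (simp add: sums_iff)
  qed
  also have "\<dots> = (\<integral>\<^sup>+n. f (g n) \<partial>count_space UNIV)" by (simp add: nn_integral_count_space_nat)
  also have "\<dots> = (\<integral>\<^sup>+x. f x \<partial>count_space A)" by (rule nn_integral_bij_count_space[OF bij])
  finally show ?thesis .
qed

lemma infsum_cmult_ennreal:
  fixes f :: "'a \<Rightarrow> ennreal"
  shows "infsum (\<lambda>x. c * f x) A = c * infsum f A"
proof -
  have "infsum (\<lambda>x. c * f x) A = (SUP F\<in>{F. finite F \<and> F \<subseteq> A}. sum (\<lambda>x. c * f x) F)"
    by (rule nonneg_infsum_complete) simp
  also have "\<dots> = (SUP F\<in>{F. finite F \<and> F \<subseteq> A}. c * sum f F)" by (simp add: sum_distrib_left)
  also have "\<dots> = c * (SUP F\<in>{F. finite F \<and> F \<subseteq> A}. sum f F)" by (rule SUP_mult_left_ennreal[symmetric])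
  also have "(SUP F\<in>{F. finite F \<and> F \<subseteq> A}. sum f F) = infsum f A"
    by (rule nonneg_infsum_complete[symmetric]) simp
  finally show ?thesis .
qed

lemma infsum_prod_ennreal:
  fixes f :: "'a \<times> 'b \<Rightarrow> ennreal"
  assumes I: "countable I" and J: "countable J"
  shows "infsum f (I \<times> J) = infsum (\<lambda>i. infsum (\<lambda>j. f (i, j)) J) I"
proof -
  interpret J: sigma_finite_measure "count_space J"
    by (rule sigma_finite_measure_count_space_countable[OF J])
  have "infsum f (I \<times> J) = (\<integral>\<^sup>+p. f p \<partial>count_space (I \<times> J))"
    by (rule infsum_nn) (use I J in simp)
  also have "\<dots> = (\<integral>\<^sup>+p. f p \<partial>(count_space I \<Otimes>\<^sub>M count_space J))"
    by (simp add: pair_measure_countable[OF I J])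
  also have "\<dots> = (\<integral>\<^sup>+i. \<integral>\<^sup>+j. f (i, j) \<partial>count_space J \<partial>count_space I)"
    by (rule J.nn_integral_fst[symmetric]) (simp add: pair_measure_countable[OF I J])
  also have "\<dots> = (\<integral>\<^sup>+i. infsum (\<lambda>j. f (i, j)) J \<partial>count_space I)"
    by (simp add: infsum_nn[OF J])
  also have "\<dots> = infsum (\<lambda>i. infsum (\<lambda>j. f (i, j)) J) I"
    by (rule infsum_nn[OF I, symmetric])
  finally show ?thesis .
qed

definition Bk :: "nat \<Rightarrow> (nat \<times> nat) set" where
  "Bk k = {(n, m). int m - int n = 2 * int k - 1}"

lemma reindex_main:
  fixes h :: "nat \<Rightarrow> nat \<Rightarrow> ennreal" and w :: "nat \<Rightarrow> ennreal"
  shows "infsum (\<lambda>(n,m). if even (Suc m - n) then w ((Suc m - n) div 2) * h n m else 0) {(n, m). n \<le> m}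
       = infsum (\<lambda>k. infsum (\<lambda>(n,m). w k * h n m) (Bk k)) {1..}"
proof -
  define \<phi> :: "nat \<times> nat \<Rightarrow> nat \<times> nat" where "\<phi> = (\<lambda>(k, n). (n, n + 2*k - 1))"
  define G where "G = (\<lambda>(n,m). if even (Suc m - n) then w ((Suc m - n) div 2) * h n m else 0)"
  have inner: "infsum (\<lambda>(n,m). w k * h n m) (Bk k) = infsum (\<lambda>n. w k * h n (n + 2*k - 1)) UNIV"
    if k: "k \<in> {1..}" for k
  proof -
    have "Bk k = (\<lambda>n. (n, n + 2*k - 1)) ` UNIV"
    proof (intro set_eqI iffI)
      fix p assume "p \<in> Bk k"
      then obtain n m where p: "p = (n,m)" "int m - int n = 2 * int k - 1" by (auto simp: Bk_def)
      then have "m = n + 2*k - 1" using k by linarith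
      then show "p \<in> (\<lambda>n. (n, n + 2*k - 1)) ` UNIV" using p by auto
    next
      fix p assume "p \<in> (\<lambda>n. (n, n + 2*k - 1)) ` UNIV"
      then show "p \<in> Bk k" using k by (auto simp: Bk_def)
    qed
    moreover have "inj (\<lambda>n. (n, n + 2*k - 1))" by (auto intro: injI)
    ultimately show ?thesis by (simp add: infsum_reindex comp_def)
  qed
  have "infsum G {(n, m). n \<le> m} = infsum G (\<phi> ` ({1..} \<times> UNIV))"
  proof (rule infsum_cong_neutral)
    fix p assume "p \<in> {(n, m). n \<le> m} - \<phi> ` ({1..} \<times> UNIV)"
    then obtain n m where p: "p = (n, m)" "n \<le> m" and np: "p \<notin> \<phi> ` ({1..} \<times> UNIV)" by auto
    have "odd (Suc m - n)"
    proof
      assume "even (Suc m - n)"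
      then obtain k where k: "Suc m - n = 2*k" by (rule evenE)
      then have "k \<ge> 1" "m = n + 2*k - 1" using p by auto
      then have "p \<in> \<phi> ` ({1..} \<times> UNIV)" using p by (auto simp: \<phi>_def image_iff intro!: bexI[of _ "(k, n)"])
      then show False using np by simp
    qed
    then show "G p = 0" using p by (simp add: G_def)
  next
    fix p assume "p \<in> \<phi> ` ({1..} \<times> UNIV) - {(n, m). n \<le> m}"
    then show "G p = 0" by (auto simp: \<phi>_def)
  qed auto
  also have "\<dots> = infsum (G \<circ> \<phi>) ({1..} \<times> UNIV)"
    by (rule infsum_reindex) (auto simp: \<phi>_def inj_on_def)
  also have "\<dots> = infsum (\<lambda>(k, n). w k * h n (n + 2*k - 1)) ({1..} \<times> UNIV)"
  proof (rule infsum_cong)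
    fix p assume "p \<in> {1::nat..} \<times> (UNIV :: nat set)"
    then obtain k n where p: "p = (k, n)" "k \<ge> 1" by auto
    then have "Suc (n + 2*k - 1) - n = 2 * k" by simp
    then show "(G \<circ> \<phi>) p = (\<lambda>(k, n). w k * h n (n + 2*k - 1)) p" using p by (simp add: G_def \<phi>_def)
  qed
  also have "\<dots> = infsum (\<lambda>k. infsum (\<lambda>n. w k * h n (n + 2*k - 1)) UNIV) {1..}"
    by (subst infsum_prod_ennreal) auto
  also have "\<dots> = infsum (\<lambda>k. infsum (\<lambda>(n,m). w k * h n m) (Bk k)) {1..}"
    by (rule infsum_cong) (simp add: inner)
  finally show ?thesis by (simp add: G_def)
qed



abbreviation AA :: "(nat \<times> nat) set" where "AA \<equiv> {(n, m). n \<le> m}"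

definition Vf :: "(nat \<Rightarrow> nat \<Rightarrow> real) \<Rightarrow> real \<Rightarrow> ennreal" where
  "Vf u x = infsum (\<lambda>(n, m). ennreal (u n m * indicator (Eset n m) x)) AA"

lemma Ufun_Vf: "x \<in> SS \<Longrightarrow> Ufun u x = Vf u x"
  unfolding Ufun_def Vf_def by (rule infsum_cong) (auto simp: Lnm_Eset)

lemma Eset_sub: "Eset n m \<subseteq> SS" by (auto simp: Eset_def)

lemma Vf_out: "x \<notin> SS \<Longrightarrow> Vf u x = 0"
proof -
  assume "x \<notin> SS"
  then have "\<And>n m. x \<notin> Eset n m" using Eset_sub by blast
  then have "\<And>n m. indicator (Eset n m) x = (0::real)" by simp
  then show "Vf u x = 0" unfolding Vf_def by (intro infsum_0) auto
qed

lemma Vf_meas: "Vf u \<in> borel_measurable lebesgue"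
proof -
  have eq: "Vf u = (\<lambda>x. SUP F\<in>{F. finite F \<and> F \<subseteq> AA}. sum (\<lambda>(n, m). ennreal (u n m * indicator (Eset n m) x)) F)"
    unfolding Vf_def by (intro ext nonneg_infsum_complete) simp
  have [measurable]: "Eset n m \<in> sets lebesgue" for n m by (rule Eset_sets)
  show ?thesis unfolding eq
  proof (rule borel_measurable_SUP)
    show "countable {F. finite F \<and> F \<subseteq> AA}" by (rule countable_Collect_finite_subset) simp
  qed measurable
qed

lemma Ufun_meas: "Ufun u \<in> borel_measurable (restrict_space lebesgue SS)"
proof -
  have "Vf u \<in> borel_measurable (restrict_space lebesgue SS)"
    by (rule measurable_restrict_space1[OF Vf_meas])
  moreover have "\<And>x. x \<in> space (restrict_space lebesgue SS) \<Longrightarrow> Ufun u x = Vf u x"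
    by (simp add: space_restrict_space Ufun_Vf)
  ultimately show ?thesis using measurable_cong by blast
qed



lemma cAA: "countable AA" by (rule countable_subset[of _ UNIV]) auto

lemma g_meas: "(\<lambda>x. ennreal (u n m * indicator (Eset n m) x)) \<in> borel_measurable lebesgue"
proof -
  have [measurable]: "Eset n m \<in> sets lebesgue" by (rule Eset_sets)
  show ?thesis by measurable
qed

lemma integral_part:
  assumes nonneg: "\<And>n m. n \<le> m \<Longrightarrow> u n m \<ge> 0"
  shows "set_nn_integral lebesgue SS (Ufun u) = 2 * infsum (\<lambda>k. infsum (\<lambda>(n, m). ennreal ((1/4) ^ k * real ((2*k) choose k) * u n m))
                         {(n, m). int m - int n = 2 * int k - 1}) {1..}"
proof -
  define g where "g = (\<lambda>p x. case p of (n, m) \<Rightarrow> ennreal (u n m * indicator (Eset n m) x))"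
  define w where "w = (\<lambda>k::nat. ennreal (2 * (1/4)^k * real ((2*k) choose k)))"
  have gm: "\<And>p. p \<in> AA \<Longrightarrow> g p \<in> borel_measurable lebesgue"
    unfolding g_def using g_meas by (auto split: prod.split)
  have "(\<integral>\<^sup>+x. Ufun u x * indicator SS x \<partial>lebesgue) = (\<integral>\<^sup>+x. Vf u x \<partial>lebesgue)"
    by (rule nn_integral_cong) (auto simp: Ufun_Vf Vf_out indicator_def)
  also have "\<dots> = (\<integral>\<^sup>+x. \<integral>\<^sup>+p. g p x \<partial>count_space AA \<partial>lebesgue)"
    by (rule nn_integral_cong) (unfold Vf_def g_def, rule infsum_nn[OF cAA])
  also have "\<dots> = (\<integral>\<^sup>+p. \<integral>\<^sup>+x. g p x \<partial>lebesgue \<partial>count_space AA)"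
    by (rule nn_integral_count_space_nn_integral[OF cAA gm])
  also have "\<dots> = (\<integral>\<^sup>+p. (case p of (n, m) \<Rightarrow> ennreal (u n m) * ennreal (pL (Suc m - n))) \<partial>count_space AA)"
  proof (rule nn_integral_cong)
    fix p assume "p \<in> space (count_space AA)"
    then obtain n m where p: "p = (n, m)" "n \<le> m" by auto
    have "(\<integral>\<^sup>+x. g p x \<partial>lebesgue) = (\<integral>\<^sup>+x. ennreal (u n m) * indicator (Eset n m) x \<partial>lebesgue)"
      by (rule nn_integral_cong) (auto simp: g_def p indicator_def)
    also have "\<dots> = ennreal (u n m) * emeasure lebesgue (Eset n m)"
      by (rule nn_integral_cmult_indicator[OF Eset_sets])
    also have "\<dots> = ennreal (u n m) * ennreal (pL (Suc m - n))" by (simp add: Eset_emeasure p)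
    finally show "(\<integral>\<^sup>+x. g p x \<partial>lebesgue) = (case p of (n, m) \<Rightarrow> ennreal (u n m) * ennreal (pL (Suc m - n)))"
      by (simp add: p)
  qed
  also have "\<dots> = infsum (\<lambda>(n, m). ennreal (u n m) * ennreal (pL (Suc m - n))) AA"
    by (rule infsum_nn[OF cAA, symmetric])
  also have "\<dots> = infsum (\<lambda>(n,m). if even (Suc m - n) then w ((Suc m - n) div 2) * ennreal (u n m) else 0) AA"
  proof (rule infsum_cong, clarify)
    fix n m :: nat
    show "ennreal (u n m) * ennreal (pL (Suc m - n)) = (if even (Suc m - n) then w ((Suc m - n) div 2) * ennreal (u n m) else 0)"
    proof (cases "even (Suc m - n)")
      case True
      then have "2 * ((Suc m - n) div 2) = Suc m - n" by simp
      then show ?thesis using True by (simp add: pL_def w_def mult.commute)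
    qed (simp add: pL_def)
  qed
  also have "\<dots> = infsum (\<lambda>k. infsum (\<lambda>(n,m). w k * ennreal (u n m)) (Bk k)) {1..}"
    by (rule reindex_main)
  also have "\<dots> = infsum (\<lambda>k. 2 * infsum (\<lambda>(n, m). ennreal ((1/4) ^ k * real ((2*k) choose k) * u n m)) (Bk k)) {1..}"
  proof (rule infsum_cong)
    fix k :: nat assume k: "k \<in> {1..}"
    have "infsum (\<lambda>(n,m). w k * ennreal (u n m)) (Bk k) = infsum (\<lambda>p. 2 * (case p of (n, m) \<Rightarrow> ennreal ((1/4) ^ k * real ((2*k) choose k) * u n m))) (Bk k)"
    proof (rule infsum_cong, clarify)
      fix n m assume "(n, m) \<in> Bk k"
      then have "n \<le> m" using k by (auto simp: Bk_def)
      then have u0: "u n m \<ge> 0" by (rule nonneg)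
      have "w k * ennreal (u n m) = ennreal (2 * ((1/4) ^ k * real ((2*k) choose k) * u n m))"
        unfolding w_def using u0 by (subst ennreal_mult[symmetric]) (auto simp: mult_ac)
      also have "\<dots> = 2 * ennreal ((1/4) ^ k * real ((2*k) choose k) * u n m)"
        using u0 by (subst ennreal_mult) auto
      finally show "w k * ennreal (u n m) = 2 * ennreal ((1/4) ^ k * real ((2*k) choose k) * u n m)" .
    qed
    then show "infsum (\<lambda>(n,m). w k * ennreal (u n m)) (Bk k) = 2 * infsum (\<lambda>(n, m). ennreal ((1/4) ^ k * real ((2*k) choose k) * u n m)) (Bk k)"
      by (simp add: infsum_cmult_ennreal)
  qed
  also have "\<dots> = 2 * infsum (\<lambda>k. infsum (\<lambda>(n, m). ennreal ((1/4) ^ k * real ((2*k) choose k) * u n m)) (Bk k)) {1..}"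
    by (rule infsum_cmult_ennreal)
  finally show ?thesis by (simp add: Bk_def)
qed

lemma alt_sum: "(\<Sum>j\<in>{n..<n+L}. alt j) = (if even L then 0 else (-1)^n)"
  by (induction L) (auto simp: alt_def power_add)

lemma Lnm_third: assumes "n \<le> m" shows "Lnm n m (1/3) = (if even (Suc m - n) then 1 else 0)"
proof -
  have "{n..m} = {n..<n + (Suc m - n)}" using assms by auto
  then show ?thesis by (simp add: Lnm_def digit_third alt_sum del: One_nat_def)
qed

lemma third_value:
  "Ufun u (1/3) = infsum (\<lambda>k. infsum (\<lambda>(n, m). ennreal (u n m)) {(n, m). int m - int n = 2 * int k - 1}) {1..}"
proof -
  have "Ufun u (1/3) = infsum (\<lambda>(n,m). if even (Suc m - n) then (\<lambda>_. 1) ((Suc m - n) div 2) * ennreal (u n m) else 0) AA"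
    unfolding Ufun_def by (rule infsum_cong) (auto simp: Lnm_third)
  also have "\<dots> = infsum (\<lambda>k. infsum (\<lambda>(n,m). (\<lambda>_. 1) k * ennreal (u n m)) (Bk k)) {1..}"
    by (rule reindex_main)
  finally show ?thesis by (simp add: Bk_def)
qed



lemma Ufun_le_third:
  assumes x: "x \<in> SS" and nonneg: "\<And>n m. n \<le> m \<Longrightarrow> u n m \<ge> 0"
  shows "Ufun u x \<le> Ufun u (1/3)"
  unfolding Ufun_def
proof (rule infsum_mono[OF nonneg_summable_on_complete nonneg_summable_on_complete], simp, simp, clarify)
  fix n m :: nat assume nm: "n \<le> m"
  have "Lnm n m x \<le> Lnm n m (1/3)"
  proof (cases "2 * card (Tx (Suc m) x \<inter> {n..m}) = Suc m - n")
    case True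
    then have "even (Suc m - n)" by (metis dvd_triv_left)
    then show ?thesis using True by (simp add: Lnm_third[OF nm] Lnm_iff[OF x nm])
  next
    case False then show ?thesis by (simp add: Lnm_third[OF nm] Lnm_iff[OF x nm])
  qed
  then show "ennreal (u n m * Lnm n m x) \<le> ennreal (u n m * Lnm n m (1/3))"
    using nonneg[OF nm] by (intro ennreal_leI mult_left_mono) auto
qed

lemma esssup_part:
  assumes nonneg: "\<And>n m. n \<le> m \<Longrightarrow> u n m \<ge> 0"
  shows "esssup (restrict_space lebesgue SS) (Ufun u) = Ufun u (1/3)"
proof (rule antisym)
  show "esssup (restrict_space lebesgue SS) (Ufun u) \<le> Ufun u (1/3)"
    by (rule esssup_I[OF Ufun_meas], rule AE_I2) (auto simp: space_restrict_space intro: Ufun_le_third nonneg)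
next
  show "Ufun u (1/3) \<le> esssup (restrict_space lebesgue SS) (Ufun u)"
    unfolding esssup_eq_AE[OF Ufun_meas]
  proof (rule Inf_greatest)
    fix z assume "z \<in> {z. AE x in restrict_space lebesgue SS. Ufun u x \<le> z}"
    then have ae: "AE x in restrict_space lebesgue SS. Ufun u x \<le> z" by simp
    show "Ufun u (1/3) \<le> z"
    proof (rule ccontr)
      assume "\<not> Ufun u (1/3) \<le> z"
      then have zl: "z < Ufun u (1/3)" by simp
      define t where "t = (\<lambda>x. (\<lambda>(n,m). ennreal (u n m * Lnm n m x)))"
      have sup: "Ufun u y = (SUP F\<in>{F. finite F \<and> F \<subseteq> AA}. sum (t y) F)" for y
        unfolding Ufun_def t_def by (rule nonneg_infsum_complete) simp
      obtain F where F: "finite F" "F \<subseteq> AA" "z < sum (t (1/3)) F"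
        using zl unfolding sup by (auto simp: less_SUP_iff)
      define N where "N = Suc (Max (snd ` F \<union> {0}))"
      have mN: "m < N" if "(n, m) \<in> F" for n m
      proof -
        have "m \<le> Max (snd ` F \<union> {0})" using F(1) that by (intro Max_ge) force+
        then show ?thesis by (simp add: N_def)
      qed
      define C where "C = Cyl N (Tx N (1/3))"
      have tC: "1/3 \<in> C" unfolding C_def by (rule in_Cyl_Tx[OF third_SS(1)])
      have dC: "digit x i = digit (1/3) i" if "x \<in> C" "i < N" for x i
        using that tC by (auto simp: C_def Cyl_def)
      have big: "z < Ufun u x" if xC: "x \<in> C" for x
      proof -
        have eq: "sum (t x) F = sum (t (1/3)) F"
        proof (rule sum.cong[OF refl])
          fix p assume pF: "p \<in> F"
          obtain n m where p: "p = (n, m)" by (cases p)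
          have "(\<Sum>j=n..m. digit x j) = (\<Sum>j=n..m. digit (1/3) j)"
          proof (rule sum.cong[OF refl])
            fix j assume "j \<in> {n..m}"
            then have "j < N" using mN[of n m] pF p by auto
            then show "digit x j = digit (1/3) j" by (rule dC[OF xC])
          qed
          then have "Lnm n m x = Lnm n m (1/3)" unfolding Lnm_def by simp
          then show "t x p = t (1/3) p" by (simp add: t_def p)
        qed
        have le: "sum (t x) F \<le> Ufun u x" unfolding sup[of x] by (rule SUP_upper) (use F in auto)
        show ?thesis using F(3) eq le by (metis order_less_le_trans)
      qed
      have "AE x in lebesgue. x \<in> SS \<longrightarrow> Ufun u x \<le> z"
        using ae by (subst (asm) AE_restrict_space_iff) (use SS_sets in auto)
      then obtain N0 where N0: "{x \<in> space lebesgue. \<not> (x \<in> SS \<longrightarrow> Ufun u x \<le> z)} \<subseteq> N0" "emeasure lebesgue N0 = 0" "N0 \<in> sets lebesgue"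
        by (rule AE_E)
      have "C \<subseteq> N0" using N0(1) big by (force simp: C_def Cyl_def not_le)
      then have "emeasure lebesgue C \<le> emeasure lebesgue N0" by (rule emeasure_mono[OF _ N0(3)])
      then have "ennreal (2 / 2^N) \<le> 0" using N0(2) Cyl_sets_emeasure(2) by (simp add: C_def)
      then show False by simp
    qed
  qed
qed


theorem theorem1:
  fixes u :: "nat \<Rightarrow> nat \<Rightarrow> real"
  assumes nonneg: "\<And>n m. n \<le> m \<Longrightarrow> u n m \<ge> 0"
  shows "(\<forall>x \<in> {-1..1} - Dset. Ufun u x \<ge> 0)
    \<and> Ufun u \<in> borel_measurable (restrict_space lebesgue ({-1..1} - Dset))
    \<and> (\<forall>x \<in> {-1..1} - Dset. -x \<in> {-1..1} - Dset \<and> Ufun u (-x) = Ufun u x)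
    \<and> (set_nn_integral lebesgue ({-1..1} - Dset) (Ufun u)
        = 2 * infsum (\<lambda>k. infsum (\<lambda>(n, m). ennreal ((1/4) ^ k * real ((2*k) choose k) * u n m))
                         {(n, m). int m - int n = 2 * int k - 1}) {1..})
    \<and> 1/3 \<notin> Dset \<and> -1/3 \<notin> Dset
    \<and> esssup (restrict_space lebesgue ({-1..1} - Dset)) (Ufun u) = Ufun u (1/3)
    \<and> Ufun u (-1/3) = Ufun u (1/3)
    \<and> Ufun u (1/3) = infsum (\<lambda>k. infsum (\<lambda>(n, m). ennreal (u n m))
                         {(n, m). int m - int n = 2 * int k - 1}) {1..}"
proof -
  have h1: "\<forall>x \<in> {-1..1} - Dset. Ufun u x \<ge> 0" by simp
  have h2: "Ufun u \<in> borel_measurable (restrict_space lebesgue ({-1..1} - Dset))" by (rule Ufun_meas)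
  have h3: "\<forall>x \<in> {-1..1} - Dset. -x \<in> {-1..1} - Dset \<and> Ufun u (-x) = Ufun u x"
    using SS_neg(1) Ufun_neg by blast
  have h4: "set_nn_integral lebesgue ({-1..1} - Dset) (Ufun u)
        = 2 * infsum (\<lambda>k. infsum (\<lambda>(n, m). ennreal ((1/4) ^ k * real ((2*k) choose k) * u n m))
                         {(n, m). int m - int n = 2 * int k - 1}) {1..}"
    by (rule integral_part[OF nonneg])
  have m3: "(-1/3::real) = -(1/3)" by simp
  have h5: "1/3 \<notin> Dset" "-1/3 \<notin> Dset" using third_SS by (auto simp: m3)
  have h6: "esssup (restrict_space lebesgue ({-1..1} - Dset)) (Ufun u) = Ufun u (1/3)"
    by (rule esssup_part[OF nonneg])
  have h7: "Ufun u (-1/3) = Ufun u (1/3)" unfolding m3 by (rule Ufun_neg[OF third_SS(1)])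
  have h8: "Ufun u (1/3) = infsum (\<lambda>k. infsum (\<lambda>(n, m). ennreal (u n m))
                         {(n, m). int m - int n = 2 * int k - 1}) {1..}"
    by (rule third_value)
  show ?thesis using h1 h2 h3 h4 h5 h6 h7 h8 by blast
qed

end
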